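(* Consider the redundancy system with scaled Bernoulli service requirements and its auxiliary system, both as described in the context, driven by the same arrivals and the same replica service requirement draws, and started in the same initial workload state $\tilde{\boldsymbol{\omega}}$ with $\tilde\omega_{(1)}=\dots=\tilde\omega_{(d)}$, i.e. $\tilde{\boldsymbol{\omega}}(0)=\boldsymbol{\omega}(0)=\tilde{\boldsymbol{\omega}}$. Then for all $t\ge 0$ and all $i=1,\dots,N$, $$\tilde\omega_{(1)}(t)-\tilde\omega_{(i)}(t)\ \ge\ \omega_{(1)}(t)-\omega_{(i)}(t).$$
   Context: Original system: $N$ parallel servers; jobs arrive according to a Poisson process of rate $\lambda$. Each arriving job is replicated into $d$ replicas ($1\le d\le N$), sent to $d$ distinct servers chosen uniformly at random without replacement. Replicas are served FCFS at each server; a job completes as soon as its first replica completes, and the other replicas are then instantaneously abandoned. Replica service requirements are i.i.d. copies of $B$, where $B=XK$ with probability $1-p$ and $B=0$ with probability $p$; here $K\ge1$ is a fixed real number, $X$ is a strictly positive random variable with $\mathbb{E}[X]=1$, and $p=1-1/K$ (so $\mathbb{E}[B]=1$). The workload $\omega_i$ of server $i$ is the real amount of work it must do to become idle absent further arrivals; between arrivals positive workloads decrease at unit rate. If a job arrives with sampled servers $s_1,\dots,s_d$ and replica requirements $b_1,\dots,b_d$, the new workload at $s_l$ is $\max\{\min_j(\omega_{s_j}+b_j),\omega_{s_l}\}$, other servers unchanged. $\omega_{(1)}\ge\dots\ge\omega_{(N)}$ denote the ordered workloads. The system is in synchronicity when all $N$ workloads are equal. A job is of type $A$ if none of its $d$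 replicas has requirement $0$ (its requirements are then $X_1K,\dots,X_dK$ with $X_j$ i.i.d. copies of $X$), of type $B$ if between $1$ and $d-1$ of its replicas have requirement $0$, and of type $C$ if all replicas have requirement $0$. A type-$B_1$ job is one whose $d-1$ replicas, at least one of which has requirement $0$, are allocated to the $d-1$ servers with the largest workloads (first $d-1$ ordered servers), and whose remaining replica, with requirement $X_dK$, is allocated to the server with the smallest workload (the $N$-th ordered server). Auxiliary system (workloads $\tilde{\boldsymbol{\omega}}(t)$): identical to the original system, driven by the same arrivals and service requirement draws, except that (i) workloads decrease over time only while the auxiliary system is in synchronicity (otherwise they stay constant between arrivals), (ii) every type-$A$ job is allocated to the $d$ servers with the largest workloads (first $d$ ordered servers) instead of to $d$ random servers, and (iii) among type-$B$ jobs only type-$B_1$ jobs are taken into account; the other type-$B$ jobs are omitted. *)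

theory Defs
  imports Complex_Main
begin

text \<open>Servers are numbered 0,...,N-1; a workload state is a function from server
  indices to reals (values at indices >= N are irrelevant).  Ranks are 0-indexed
  internally: rank 0 is the server with the largest workload.\<close>

type_synonym state = "nat \<Rightarrow> real"

text \<open>Ordered workloads, 1-indexed as in the paper: ord_wl N w 1 is the largest,
  ord_wl N w N the smallest.\<close>
definition ord_wl :: "nat \<Rightarrow> state \<Rightarrow> nat \<Rightarrow> real" where
  "ord_wl N w i = rev (sort (map w [0..<N])) ! (i - 1)"

definition sorts :: "nat \<Rightarrow> state \<Rightarrow> (nat \<Rightarrow> nat) \<Rightarrow> bool" where
  "sorts N w \<sigma> \<longleftrightarrow> bij_betw \<sigma> {..<N} {..<N} \<and>
     (\<forall>i j. i \<le> j \<and> j < N \<longrightarrow> w (\<sigma> j) \<le> w (\<sigma> i))"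

definition in_sync :: "nat \<Rightarrow> state \<Rightarrow> bool" where
  "in_sync N w \<longleftrightarrow> (\<forall>k<N. w k = w 0)"

definition drain :: "real \<Rightarrow> state \<Rightarrow> state" where
  "drain s w = (\<lambda>k. max (w k - s) 0)"

definition aux_drain :: "nat \<Rightarrow> real \<Rightarrow> state \<Rightarrow> state" where
  "aux_drain N s w = (if in_sync N w then drain s w else w)"

definition job_update :: "nat \<Rightarrow> (nat \<Rightarrow> nat) \<Rightarrow> (nat \<Rightarrow> real) \<Rightarrow> state \<Rightarrow> state" where
  "job_update d srv b w =
     (let M = Min ((\<lambda>j. w (srv j) + b j) ` {..<d})
      in (\<lambda>k. if k \<in> srv ` {..<d} then max M (w k) else w k))"

text \<open>Service requirement of replica j of job n: z n j says it is a zero draw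
  (probability p), otherwise it is X K with X = x n j.\<close>
definition req :: "real \<Rightarrow> (nat \<Rightarrow> nat \<Rightarrow> bool) \<Rightarrow> (nat \<Rightarrow> nat \<Rightarrow> real) \<Rightarrow> nat \<Rightarrow> nat \<Rightarrow> real" where
  "req K z x n j = (if z n j then 0 else x n j * K)"

definition typeA :: "nat \<Rightarrow> (nat \<Rightarrow> nat \<Rightarrow> bool) \<Rightarrow> nat \<Rightarrow> bool" where
  "typeA d z n \<longleftrightarrow> (\<forall>j<d. \<not> z n j)"

definition typeC :: "nat \<Rightarrow> (nat \<Rightarrow> nat \<Rightarrow> bool) \<Rightarrow> nat \<Rightarrow> bool" where
  "typeC d z n \<longleftrightarrow> (\<forall>j<d. z n j)"

definition typeB :: "nat \<Rightarrow> (nat \<Rightarrow> nat \<Rightarrow> bool) \<Rightarrow> nat \<Rightarrow> bool" where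
  "typeB d z n \<longleftrightarrow> \<not> typeA d z n \<and> \<not> typeC d z n"

text \<open>r n j is the rank position (0 = largest workload) to which replica j of job n is
  sent.  Type B1: the replicas go to the top d-1 ranks and to the bottom rank N-1, the
  replica at the bottom rank has nonzero requirement (so, the job being of type B, at
  least one of the other d-1 replicas has requirement 0).\<close>
definition typeB1 :: "nat \<Rightarrow> nat \<Rightarrow> (nat \<Rightarrow> nat \<Rightarrow> bool) \<Rightarrow> (nat \<Rightarrow> nat \<Rightarrow> nat) \<Rightarrow> nat \<Rightarrow> bool" where
  "typeB1 N d z r n \<longleftrightarrow> typeB d z n \<and> r n ` {..<d} = insert (N - 1) {..<d - 1} \<and>
     (\<forall>j<d. r n j = N - 1 \<longrightarrow> \<not> z n j)"

text \<open>Jump maps: job index n, rank-to-server map sigma of the current state, state.\<close>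
definition orig_jump :: "nat \<Rightarrow> real \<Rightarrow> (nat \<Rightarrow> nat \<Rightarrow> bool) \<Rightarrow> (nat \<Rightarrow> nat \<Rightarrow> real) \<Rightarrow>
    (nat \<Rightarrow> nat \<Rightarrow> nat) \<Rightarrow> nat \<Rightarrow> (nat \<Rightarrow> nat) \<Rightarrow> state \<Rightarrow> state" where
  "orig_jump d K z x r n \<sigma> w = job_update d (\<lambda>j. \<sigma> (r n j)) (req K z x n) w"

definition aux_jump :: "nat \<Rightarrow> nat \<Rightarrow> real \<Rightarrow> (nat \<Rightarrow> nat \<Rightarrow> bool) \<Rightarrow> (nat \<Rightarrow> nat \<Rightarrow> real) \<Rightarrow>
    (nat \<Rightarrow> nat \<Rightarrow> nat) \<Rightarrow> nat \<Rightarrow> (nat \<Rightarrow> nat) \<Rightarrow> state \<Rightarrow> state" where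
  "aux_jump N d K z x r n \<sigma> w =
     (if typeA d z n then job_update d (\<lambda>j. \<sigma> j) (req K z x n) w
      else if typeB1 N d z r n \<or> typeC d z n then job_update d (\<lambda>j. \<sigma> (r n j)) (req K z x n) w
      else w)"

text \<open>Generic piecewise-deterministic trajectory: flow fl between arrivals, jump jp at
  arrival times T 0 < T 1 < ...; post n is the state right after the n-th arrival,
  pre n the state right before it.\<close>
fun post :: "(real \<Rightarrow> state \<Rightarrow> state) \<Rightarrow> (nat \<Rightarrow> (nat \<Rightarrow> nat) \<Rightarrow> state \<Rightarrow> state) \<Rightarrow>
    (nat \<Rightarrow> real) \<Rightarrow> (nat \<Rightarrow> nat \<Rightarrow> nat) \<Rightarrow> state \<Rightarrow> nat \<Rightarrow> state" where
  "post fl jp T \<sigma> w0 0 = jp 0 (\<sigma> 0) (fl (T 0) w0)"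
| "post fl jp T \<sigma> w0 (Suc n) =
     jp (Suc n) (\<sigma> (Suc n)) (fl (T (Suc n) - T n) (post fl jp T \<sigma> w0 n))"

definition pre :: "(real \<Rightarrow> state \<Rightarrow> state) \<Rightarrow> (nat \<Rightarrow> (nat \<Rightarrow> nat) \<Rightarrow> state \<Rightarrow> state) \<Rightarrow>
    (nat \<Rightarrow> real) \<Rightarrow> (nat \<Rightarrow> nat \<Rightarrow> nat) \<Rightarrow> state \<Rightarrow> nat \<Rightarrow> state" where
  "pre fl jp T \<sigma> w0 n = (case n of 0 \<Rightarrow> fl (T 0) w0
      | Suc m \<Rightarrow> fl (T (Suc m) - T m) (post fl jp T \<sigma> w0 m))"

definition traj :: "(real \<Rightarrow> state \<Rightarrow> state) \<Rightarrow> (nat \<Rightarrow> (nat \<Rightarrow> nat) \<Rightarrow> state \<Rightarrow> state) \<Rightarrow>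
    (nat \<Rightarrow> real) \<Rightarrow> (nat \<Rightarrow> nat \<Rightarrow> nat) \<Rightarrow> state \<Rightarrow> real \<Rightarrow> state" where
  "traj fl jp T \<sigma> w0 t = (if t < T 0 then fl t w0
      else (let n = Max {n. T n \<le> t} in fl (t - T n) (post fl jp T \<sigma> w0 n)))"

end

theory Submission
  imports Defs "HOL-Library.Multiset"
begin

definition cnt :: "nat \<Rightarrow> state \<Rightarrow> real \<Rightarrow> nat" where
  "cnt N w v = card {k. k < N \<and> v \<le> w k}"

lemma KL:
  assumes "1 \<le> i" "i \<le> N"
  shows "(v \<le> ord_wl N w i) \<longleftrightarrow> i \<le> cnt N w v"
proof -
  define xs where "xs = rev (sort (map w [0..<N]))"
  have len: "length xs = N" by (simp add: xs_def)
  have sd: "xs!b \<le> xs!a" if "a \<le> b" "b < N" for a b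
    using sorted_rev_nth_mono[of xs a b] that len by (simp add: xs_def)
  have c0: "length (filter (\<lambda>y. v \<le> y) xs) = length (filter (\<lambda>y. v \<le> y) (map w [0..<N]))"
    by (metis xs_def mset_filter size_mset mset_rev mset_sort)
  have c: "cnt N w v = card {j. j < N \<and> v \<le> xs!j}"
  proof -
    have e: "{j. j < N \<and> v \<le> map w [0..<N] ! j} = {k. k < N \<and> v \<le> w k}" by auto
    show ?thesis using c0[unfolded length_filter_conv_card len] e unfolding cnt_def by simp
  qed
  have o: "ord_wl N w i = xs!(i-1)" by (simp add: ord_wl_def xs_def)
  show ?thesis
  proof
    assume h: "v \<le> ord_wl N w i"
    have "{..<i} \<subseteq> {j. j < N \<and> v \<le> xs!j}"
    proof
      fix j assume "j \<in> {..<i}"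
      thus "j \<in> {j. j < N \<and> v \<le> xs!j}" using h o sd[of j "i-1"] assms by force
    qed
    from card_mono[OF _ this] show "i \<le> cnt N w v" unfolding c by simp
  next
    assume h: "i \<le> cnt N w v"
    show "v \<le> ord_wl N w i"
    proof (rule ccontr)
      assume n: "\<not> v \<le> ord_wl N w i"
      have "{j. j < N \<and> v \<le> xs!j} \<subseteq> {..<i-1}"
      proof
        fix j assume "j \<in> {j. j < N \<and> v \<le> xs!j}"
        thus "j \<in> {..<i-1}" using n o sd[of "i-1" j] assms by (cases "j < i - 1") auto
      qed
      from card_mono[OF _ this] have "cnt N w v \<le> i - 1" unfolding c by simp
      thus False using h assms by simp
    qed
  qed
qed

lemma O_mem:
  assumes "1 \<le> i" "i \<le> N"
  shows "\<exists>k<N. ord_wl N w i = w k"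
proof -
  have "rev (sort (map w [0..<N])) ! (i - 1) \<in> set (rev (sort (map w [0..<N])))"
    by (rule nth_mem) (use assms in simp)
  thus ?thesis by (auto simp: ord_wl_def)
qed

lemma O_anti:
  assumes "1 \<le> i" "i \<le> j" "j \<le> N"
  shows "ord_wl N w j \<le> ord_wl N w i"
proof -
  have "j \<le> cnt N w (ord_wl N w j)" using KL[of j N "ord_wl N w j" w] assms by simp
  thus ?thesis using KL[of i N "ord_wl N w j" w] assms by simp
qed

lemma cnt_le: "cnt N w v \<le> N"
proof -
  have "{k. k < N \<and> v \<le> w k} \<subseteq> {..<N}" by auto
  from card_mono[OF _ this] show ?thesis by (simp add: cnt_def)
qed

lemma O_top:
  assumes "k < N"
  shows "w k \<le> ord_wl N w 1"
proof -
  have "k \<in> {j. j < N \<and> w k \<le> w j}" using assms by simp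
  hence "0 < card {j. j < N \<and> w k \<le> w j}" by (intro card_gt_0_iff[THEN iffD2]) auto
  thus ?thesis using KL[of 1 N "w k" w] assms by (simp add: cnt_def)
qed

lemma O_bot:
  assumes "k < N"
  shows "ord_wl N w N \<le> w k"
proof (rule ccontr)
  assume n: "\<not> ord_wl N w N \<le> w k"
  have "N \<le> cnt N w (ord_wl N w N)" using KL[of N N "ord_wl N w N" w] assms by simp
  moreover have "{j. j < N \<and> ord_wl N w N \<le> w j} \<subseteq> {..<N} - {k}" using n by auto
  from card_mono[OF _ this] have "cnt N w (ord_wl N w N) \<le> N - 1" using assms by (simp add: cnt_def)
  ultimately show False using assms by simp
qed

lemma O_mono:
  assumes "\<forall>k<N. w k \<le> w' k" "1 \<le> i" "i \<le> N"
  shows "ord_wl N w i \<le> ord_wl N w' i"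
proof -
  let ?v = "ord_wl N w i"
  have "i \<le> cnt N w ?v" using KL[of i N ?v w] assms by simp
  moreover have "{k. k < N \<and> ?v \<le> w k} \<subseteq> {k. k < N \<and> ?v \<le> w' k}" using assms(1) by force
  from card_mono[OF _ this] have "cnt N w ?v \<le> cnt N w' ?v" by (simp add: cnt_def)
  ultimately show ?thesis using KL[of i N ?v w'] assms by simp
qed

lemma O_upper:
  assumes "\<forall>k<N. w k \<le> c" "1 \<le> i" "i \<le> N"
  shows "ord_wl N w i \<le> c"
  using O_mem[OF assms(2,3), of w] assms(1) by auto

lemma O_ext:
  assumes "\<forall>k<N. w k = w' k"
  shows "ord_wl N w i = ord_wl N w' i"
proof -
  have e: "map w [0..<N] = map w' [0..<N]" using assms by simp
  show ?thesis unfolding ord_wl_def e ..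
qed

lemma O_sorts:
  assumes s: "sorts N w \<sigma>" and i: "i < N"
  shows "ord_wl N w (Suc i) = w (\<sigma> i)"
proof -
  have bij: "bij_betw \<sigma> {..<N} {..<N}" and mo: "\<And>a b. a \<le> b \<Longrightarrow> b < N \<Longrightarrow> w (\<sigma> b) \<le> w (\<sigma> a)"
    using s by (auto simp: sorts_def)
  have inj: "inj_on \<sigma> {..<N}" using bij by (simp add: bij_betw_def)
  have img: "\<sigma> ` {..<N} = {..<N}" using bij by (simp add: bij_betw_def)
  let ?v = "w (\<sigma> i)"
  have "\<sigma> ` {..i} \<subseteq> {k. k < N \<and> ?v \<le> w k}"
  proof
    fix k assume "k \<in> \<sigma> ` {..i}"
    then obtain j where j: "j \<le> i" "k = \<sigma> j" by auto
    have "k < N" using j i img by auto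
    thus "k \<in> {k. k < N \<and> ?v \<le> w k}" using mo[OF j(1) i] j by auto
  qed
  from card_mono[OF _ this] have "card (\<sigma> ` {..i}) \<le> cnt N w ?v" by (simp add: cnt_def)
  moreover have "card (\<sigma> ` {..i}) = Suc i"
    proof -
    have "{..i} \<subseteq> {..<N}" using i by auto
    thus ?thesis using card_image[OF inj_on_subset[OF inj, of "{..i}"]] by simp
  qed
  ultimately have ge: "?v \<le> ord_wl N w (Suc i)" using KL[of "Suc i" N ?v w] i by simp
  have le: "ord_wl N w (Suc i) \<le> ?v"
  proof (rule ccontr)
    let ?u = "ord_wl N w (Suc i)"
    assume n: "\<not> ?u \<le> ?v"
    have "Suc i \<le> cnt N w ?u" using KL[of "Suc i" N ?u w] i by simp
    moreover have "{k. k < N \<and> ?u \<le> w k} \<subseteq> \<sigma> ` {..<i}"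
    proof
      fix k assume k: "k \<in> {k. k < N \<and> ?u \<le> w k}"
      hence "k \<in> \<sigma> ` {..<N}" using img by simp
      then obtain j where j: "j < N" "k = \<sigma> j" by auto
      have "j < i"
      proof (rule ccontr)
        assume "\<not> j < i"
        hence "w k \<le> ?v" using mo[of i j] j by simp
        thus False using k n by simp
      qed
      thus "k \<in> \<sigma> ` {..<i}" using j by auto
    qed
    from card_mono[OF _ this] have "cnt N w ?u \<le> card (\<sigma> ` {..<i})" by (simp add: cnt_def)
    moreover have "card (\<sigma> ` {..<i}) \<le> i" using card_image_le[of "{..<i}" \<sigma>] by simp
    ultimately show False by simp
  qed
  show ?thesis using ge le by simp
qed

lemma O_map:
  assumes "mono f" "1 \<le> i" "i \<le> N"
  shows "ord_wl N (\<lambda>k. f (w k)) i = f (ord_wl N w i)"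
proof -
  have "sort (map f (map w [0..<N])) = map f (sort (map w [0..<N]))"
  proof (rule properties_for_sort)
    show "mset (map f (sort (map w [0..<N]))) = mset (map f (map w [0..<N]))"
      by (metis mset_map mset_sort)
    show "sorted (map f (sort (map w [0..<N])))"
      by (rule sorted_map_mono) (use assms(1) in \<open>auto simp: mono_on_def mono_def\<close>)
  qed
  hence "rev (sort (map (\<lambda>k. f (w k)) [0..<N])) = map f (rev (sort (map w [0..<N])))"
    by (simp add: rev_map comp_def)
  thus ?thesis using assms by (simp add: ord_wl_def)
qed

definition G :: "nat \<Rightarrow> state \<Rightarrow> state \<Rightarrow> bool" where
  "G N wo wa \<longleftrightarrow> (\<forall>i. 1 \<le> i \<and> i \<le> N \<longrightarrow>
     ord_wl N wo 1 - ord_wl N wo i \<le> ord_wl N wa 1 - ord_wl N wa i)"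

definition TD :: "nat \<Rightarrow> nat \<Rightarrow> state \<Rightarrow> bool" where
  "TD N d w \<longleftrightarrow> (\<forall>i. 1 \<le> i \<and> i \<le> d \<longrightarrow> ord_wl N w i = ord_wl N w 1)"

lemma TD_orig:
  assumes "G N wo wa" "TD N d wa" "d \<le> N"
  shows "TD N d wo"
  unfolding TD_def
proof (intro allI impI)
  fix i assume i: "1 \<le> i \<and> i \<le> d"
  have iN: "i \<le> N" using i assms(3) by linarith
  have "ord_wl N wa i = ord_wl N wa 1" using assms(2) i unfolding TD_def by blast
  moreover have "ord_wl N wo 1 - ord_wl N wo i \<le> ord_wl N wa 1 - ord_wl N wa i"
    using assms(1) i iN unfolding G_def by blast
  moreover have "ord_wl N wo i \<le> ord_wl N wo 1" using O_anti[of 1 i N wo] i iN by linarith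
  ultimately show "ord_wl N wo i = ord_wl N wo 1" by linarith
qed

lemma sync_all:
  assumes "in_sync N w" "1 \<le> i" "i \<le> N"
  shows "ord_wl N w i = ord_wl N w 1"
proof -
  obtain k where k: "k < N" "ord_wl N w i = w k" using O_mem[OF assms(2,3)] by blast
  obtain k' where k': "k' < N" "ord_wl N w 1 = w k'" using O_mem[of 1 N w] assms by auto
  have "w k = w 0" "w k' = w 0" using assms(1) k(1) k'(1) unfolding in_sync_def by blast+
  thus ?thesis using k k' by simp
qed

lemma drain_O:
  assumes "1 \<le> i" "i \<le> N"
  shows "ord_wl N (drain s w) i = max (ord_wl N w i - s) 0"
proof -
  have m: "mono (\<lambda>y::real. max (y - s) 0)" by (auto simp: mono_def)
  show ?thesis unfolding drain_def using O_map[OF m assms, of w] by simp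
qed

lemma FLOW:
  assumes "G N wo wa" "TD N d wa" "1 \<le> N" "d \<le> N"
  shows "G N (drain s wo) (aux_drain N s wa) \<and> TD N d (aux_drain N s wa)"
proof -
  have og: "ord_wl N (drain s wo) 1 - ord_wl N (drain s wo) i \<le> ord_wl N wo 1 - ord_wl N wo i"
    if "1 \<le> i" "i \<le> N" for i
  proof -
    have "ord_wl N wo i \<le> ord_wl N wo 1" using O_anti[of 1 i N wo] that by linarith
    moreover have "ord_wl N (drain s wo) 1 = max (ord_wl N wo 1 - s) 0" using drain_O[of 1 N s wo] assms(3) by linarith
    moreover have "ord_wl N (drain s wo) i = max (ord_wl N wo i - s) 0" using drain_O[OF that, of s wo] .
    ultimately show ?thesis by linarith
  qed
  show ?thesis
  proof (cases "in_sync N wa")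
    case True
    hence ad: "aux_drain N s wa = drain s wa" by (simp add: aux_drain_def)
    have eq: "ord_wl N wa i = ord_wl N wa 1" if "1 \<le> i" "i \<le> N" for i using sync_all[OF True that] .
    have eq2: "ord_wl N (drain s wa) i = ord_wl N (drain s wa) 1" if "1 \<le> i" "i \<le> N" for i
    proof -
      have "ord_wl N (drain s wa) 1 = max (ord_wl N wa 1 - s) 0" using drain_O[of 1 N s wa] assms(3) by linarith
      moreover have "ord_wl N (drain s wa) i = max (ord_wl N wa i - s) 0" using drain_O[OF that, of s wa] .
      ultimately show ?thesis using eq[OF that] by metis
    qed
    have "G N (drain s wo) (drain s wa)" unfolding G_def
    proof (intro allI impI)
      fix i assume i: "1 \<le> i \<and> i \<le> N"
      have "ord_wl N wo 1 - ord_wl N wo i \<le> ord_wl N wa 1 - ord_wl N wa i"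
        using assms(1) i unfolding G_def by blast
      moreover have "ord_wl N wa i = ord_wl N wa 1" using eq i by blast
      moreover have "ord_wl N (drain s wa) i = ord_wl N (drain s wa) 1" using eq2 i by blast
      ultimately show "ord_wl N (drain s wo) 1 - ord_wl N (drain s wo) i \<le> ord_wl N (drain s wa) 1 - ord_wl N (drain s wa) i"
        using og[of i] i by linarith
    qed
    moreover have "TD N d (drain s wa)" unfolding TD_def
    proof (intro allI impI)
      fix i assume i: "1 \<le> i \<and> i \<le> d"
      show "ord_wl N (drain s wa) i = ord_wl N (drain s wa) 1" using eq2 i assms(4) by (meson order_trans)
    qed
    ultimately show ?thesis using ad by simp
  next
    case False
    hence ad: "aux_drain N s wa = wa" by (simp add: aux_drain_def)
    have "G N (drain s wo) wa" unfolding G_def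
    proof (intro allI impI)
      fix i assume i: "1 \<le> i \<and> i \<le> N"
      have "ord_wl N wo 1 - ord_wl N wo i \<le> ord_wl N wa 1 - ord_wl N wa i"
        using assms(1) i unfolding G_def by blast
      thus "ord_wl N (drain s wo) 1 - ord_wl N (drain s wo) i \<le> ord_wl N wa 1 - ord_wl N wa i"
        using og[of i] i by linarith
    qed
    thus ?thesis using ad assms(2) by simp
  qed
qed

lemma JU_Mle: "j < (d::nat) \<Longrightarrow> Min ((\<lambda>j. w (srv j) + b j) ` {..<d}) \<le> w (srv j) + b j"
  by (rule Min_le) simp_all

lemma JU_in: "k \<in> srv ` {..<(d::nat)} \<Longrightarrow>
   job_update d srv b w k = max (Min ((\<lambda>j. w (srv j) + b j) ` {..<d})) (w k)"
  by (simp add: job_update_def Let_def)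

lemma JU_out: "k \<notin> srv ` {..<d} \<Longrightarrow> job_update d srv b w k = w k"
  by (simp add: job_update_def Let_def)

lemma JU_ge: "w k \<le> job_update d srv b w k"
  by (cases "k \<in> srv ` {..<d}") (simp_all add: JU_in JU_out)

lemma JU_zero:
  assumes "\<forall>j<d. b j = 0"
  shows "job_update d srv b w = w"
proof (rule ext)
  fix k
  show "job_update d srv b w k = w k"
  proof (cases "k \<in> srv ` {..<d}")
    case True
    then obtain j where j: "j < d" "k = srv j" by auto
    have "Min ((\<lambda>j. w (srv j) + b j) ` {..<d}) \<le> w k" using JU_Mle[OF j(1), of w srv b] assms j by simp
    thus ?thesis using JU_in[OF True] by simp
  qed (simp add: JU_out)
qed

lemma JU_B_top:
  assumes "j0 < d" "b j0 = 0" "srv j0 < N" "k < N"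
  shows "job_update d srv b w k \<le> ord_wl N w 1"
proof (cases "k \<in> srv ` {..<d}")
  case True
  have "Min ((\<lambda>j. w (srv j) + b j) ` {..<d}) \<le> w (srv j0)" using JU_Mle[OF assms(1), of w srv b] assms(2) by simp
  also have "\<dots> \<le> ord_wl N w 1" using O_top[OF assms(3)] .
  finally show ?thesis using JU_in[OF True] O_top[OF assms(4), of w] by simp
next
  case False thus ?thesis using JU_out O_top[OF assms(4)] by simp
qed

lemma ORIG_B:
  assumes "j0 < d" "b j0 = 0" "\<forall>j<d. srv j < N" "1 \<le> i" "i \<le> N"
  shows "ord_wl N (job_update d srv b w) 1 - ord_wl N (job_update d srv b w) i
         \<le> ord_wl N w 1 - ord_wl N w i"
proof -
  have "ord_wl N (job_update d srv b w) 1 \<le> ord_wl N w 1"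
  proof -
    have "\<forall>k<N. job_update d srv b w k \<le> ord_wl N w 1"
      using JU_B_top[of j0 d b srv N] assms by blast
    thus ?thesis using O_upper[of N "job_update d srv b w" "ord_wl N w 1" 1] assms by simp
  qed
  moreover have "ord_wl N w i \<le> ord_wl N (job_update d srv b w) i"
    using O_mono[OF _ assms(4,5)] JU_ge by blast
  ultimately show ?thesis by linarith
qed

lemma cnt_upd:
  assumes "p < N"
  shows "cnt N (w(p:=y)) v + (if v \<le> w p then 1 else 0) = cnt N w v + (if v \<le> y then 1 else 0)"
proof -
  define S where "S = {k. k < N \<and> v \<le> w k}"
  define S' where "S' = {k. k < N \<and> v \<le> (w(p:=y)) k}"
  have fS: "finite S" "finite S'" by (auto simp: S_def S'_def)
  have d: "S' - {p} = S - {p}" by (auto simp: S_def S'_def)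
  have c1: "card S = card (S - {p}) + (if v \<le> w p then 1 else 0)"
  proof (cases "p \<in> S")
    case True thus ?thesis using card.remove[OF fS(1) True] by (simp add: S_def)
  next
    case False thus ?thesis using assms by (simp add: S_def)
  qed
  have c2: "card S' = card (S' - {p}) + (if v \<le> y then 1 else 0)"
  proof (cases "p \<in> S'")
    case True thus ?thesis using card.remove[OF fS(2) True] by (simp add: S'_def)
  next
    case False thus ?thesis using assms by (simp add: S'_def)
  qed
  show ?thesis using c1 c2 d unfolding cnt_def S_def[symmetric] S'_def[symmetric] by simp
qed

lemma cnt_dom:
  assumes "\<forall>i. 1 \<le> i \<and> i \<le> N \<longrightarrow> ord_wl N wa i - \<delta> \<le> ord_wl N wo i"
  shows "cnt N wa (v + \<delta>) \<le> cnt N wo v"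
proof (cases "cnt N wa (v + \<delta>) = 0")
  case False
  let ?m = "cnt N wa (v + \<delta>)"
  have m: "1 \<le> ?m" "?m \<le> N" using False cnt_le[of N wa] by auto
  have "v + \<delta> \<le> ord_wl N wa ?m" using KL[OF m, of "v+\<delta>" wa] by simp
  hence "v \<le> ord_wl N wo ?m" using assms m by force
  thus ?thesis using KL[OF m, of v wo] by simp
qed simp

lemma TOPSAME:
  assumes "p < N" "w p = ord_wl N w N" "0 \<le> \<beta>"
  shows "ord_wl N (w(p := min (ord_wl N w 1) (ord_wl N w N + \<beta>))) 1 = ord_wl N w 1"
proof -
  let ?u = "w(p := min (ord_wl N w 1) (ord_wl N w N + \<beta>))"
  have N1: "1 \<le> N" using assms by simp
  have cN: "ord_wl N w N \<le> ord_wl N w 1" using O_anti[of 1 N N w] N1 by simp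
  have ge: "\<forall>k<N. w k \<le> ?u k" using assms cN by auto
  have le: "\<forall>k<N. ?u k \<le> ord_wl N w 1" using O_top[of _ N w] by auto
  show ?thesis using O_mono[OF ge order_refl N1] O_upper[OF le order_refl N1] by linarith
qed

lemma TD_upd:
  assumes "TD N d w" "d \<le> N" "p < N" "w p = ord_wl N w N" "0 \<le> \<beta>"
  shows "TD N d (w(p := min (ord_wl N w 1) (ord_wl N w N + \<beta>)))"
  unfolding TD_def
proof (intro allI impI)
  let ?u = "w(p := min (ord_wl N w 1) (ord_wl N w N + \<beta>))"
  fix i assume i: "1 \<le> i \<and> i \<le> d"
  have iN: "1 \<le> i" "i \<le> N" using i assms(2) by auto
  have N1: "1 \<le> N" using assms by simp
  have cN: "ord_wl N w N \<le> ord_wl N w 1" using O_anti[of 1 N N w] N1 by simp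
  have ge: "\<forall>k<N. w k \<le> ?u k" using assms cN by auto
  have "ord_wl N w i \<le> ord_wl N ?u i" using O_mono[OF ge iN] .
  moreover have "ord_wl N w i = ord_wl N w 1" using assms(1) i unfolding TD_def by blast
  moreover have "ord_wl N ?u 1 = ord_wl N w 1" using TOPSAME[OF assms(3,4,5)] .
  moreover have "ord_wl N ?u i \<le> ord_wl N ?u 1" using O_anti[of 1 i N ?u] iN by linarith
  ultimately show "ord_wl N ?u i = ord_wl N ?u 1" by linarith
qed

lemma B1_CMP:
  assumes g: "G N wo wa" and po: "po < N" "wo po = ord_wl N wo N"
    and pa: "pa < N" "wa pa = ord_wl N wa N" and b: "0 \<le> \<beta>"
  shows "G N (wo(po := min (ord_wl N wo 1) (ord_wl N wo N + \<beta>)))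
             (wa(pa := min (ord_wl N wa 1) (ord_wl N wa N + \<beta>)))"
proof -
  define ao where "ao = ord_wl N wo 1"
  define co where "co = ord_wl N wo N"
  define aa where "aa = ord_wl N wa 1"
  define ca where "ca = ord_wl N wa N"
  define uo where "uo = wo(po := min ao (co + \<beta>))"
  define ua where "ua = wa(pa := min aa (ca + \<beta>))"
  define \<delta> where "\<delta> = aa - ao"
  have N1: "1 \<le> N" using po by simp
  have tuo: "ord_wl N uo 1 = ao" unfolding uo_def ao_def co_def using TOPSAME[OF po b] .
  have tua: "ord_wl N ua 1 = aa" unfolding ua_def aa_def ca_def using TOPSAME[OF pa b] .
  have gi: "ao - ord_wl N wo i \<le> aa - ord_wl N wa i" if "1 \<le> i" "i \<le> N" for i
    using g that unfolding G_def ao_def aa_def by blast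
  have gN: "ca - \<delta> \<le> co" using gi[OF N1 order_refl] unfolding co_def ca_def \<delta>_def by linarith
  have dom: "\<forall>i. 1 \<le> i \<and> i \<le> N \<longrightarrow> ord_wl N wa i - \<delta> \<le> ord_wl N wo i"
    using gi unfolding \<delta>_def by force
  have cnt_claim: "cnt N ua (v + \<delta>) \<le> cnt N uo v" for v
  proof (cases "v \<le> co")
    case True
    have "{k. k < N \<and> v \<le> uo k} = {k. k < N}"
    proof -
      have "v \<le> uo k" if "k < N" for k
      proof -
        have "co \<le> wo k" using O_bot[OF that] unfolding co_def .
        moreover have "wo k \<le> uo k" unfolding uo_def using po(2) O_anti[of 1 N N wo] N1 b
          unfolding ao_def co_def by auto
        ultimately show ?thesis using True by linarith
      qed
      thus ?thesis by auto
    qed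
    hence "cnt N uo v = N" by (simp add: cnt_def)
    thus ?thesis using cnt_le[of N ua] by simp
  next
    case False
    have e1: "cnt N uo v = cnt N wo v + (if v \<le> min ao (co + \<beta>) then 1 else 0)"
      using cnt_upd[OF po(1), of wo "min ao (co + \<beta>)" v] False po(2) unfolding uo_def co_def by simp
    have e2: "cnt N ua (v + \<delta>) \<le> cnt N wa (v + \<delta>) + (if v + \<delta> \<le> min aa (ca + \<beta>) then 1 else 0)"
      using cnt_upd[OF pa(1), of wa "min aa (ca + \<beta>)" "v + \<delta>"] unfolding ua_def by linarith
    have e3: "cnt N wa (v + \<delta>) \<le> cnt N wo v" using cnt_dom[OF dom] .
    have e4: "v \<le> min ao (co + \<beta>)" if "v + \<delta> \<le> min aa (ca + \<beta>)"
      using that gN unfolding \<delta>_def by linarith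
    show ?thesis using e1 e2 e3 e4 by (auto split: if_splits)
  qed
  show ?thesis unfolding G_def
  proof (intro allI impI)
    fix i assume i: "1 \<le> i \<and> i \<le> N"
    let ?u = "ord_wl N ua i"
    have "i \<le> cnt N ua ?u" using KL[of i N ?u ua] i by simp
    moreover have "cnt N ua ((?u - \<delta>) + \<delta>) \<le> cnt N uo (?u - \<delta>)" by (rule cnt_claim)
    ultimately have "i \<le> cnt N uo (?u - \<delta>)" by simp
    hence "?u - \<delta> \<le> ord_wl N uo i" using KL[of i N "?u - \<delta>" uo] i by simp
    thus "ord_wl N (wo(po := min (ord_wl N wo 1) (ord_wl N wo N + \<beta>))) 1 -
          ord_wl N (wo(po := min (ord_wl N wo 1) (ord_wl N wo N + \<beta>))) i
          \<le> ord_wl N (wa(pa := min (ord_wl N wa 1) (ord_wl N wa N + \<beta>))) 1 -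
          ord_wl N (wa(pa := min (ord_wl N wa 1) (ord_wl N wa N + \<beta>))) i"
      using tuo tua unfolding uo_def ua_def ao_def co_def aa_def ca_def \<delta>_def by linarith
  qed
qed

lemma JU_le_max: "job_update d srv b w k \<le> max (Min ((\<lambda>j. w (srv j) + b j) ` {..<(d::nat)})) (w k)"
  by (cases "k \<in> srv ` {..<d}") (simp_all add: JU_in JU_out)

lemma Min_b:
  fixes b :: "nat \<Rightarrow> real"
  assumes "1 \<le> (d::nat)"
  obtains js where "js < d" "b js = Min (b ` {..<d})" "\<forall>j<d. Min (b ` {..<d}) \<le> b j"
proof -
  have "0 \<in> {..<d}" using assms by simp
  hence ne: "{..<d} \<noteq> {}" by blast
  have "Min (b ` {..<d}) \<in> b ` {..<d}" using ne by (intro Min_in) auto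
  then obtain js where "js < d" "b js = Min (b ` {..<d})" by auto
  moreover have "\<forall>j<d. Min (b ` {..<d}) \<le> (b j :: real)" by (auto intro: Min_le)
  ultimately show ?thesis using that by blast
qed

lemma ORIG_A:
  assumes d: "1 \<le> d" "d \<le> N" and b: "\<forall>j<d. 0 \<le> b j" and srv: "\<forall>j<d. srv j < N"
    and inj: "inj_on srv {..<d}" and td: "TD N d w"
  shows "ord_wl N (job_update d srv b w) 1 \<le> ord_wl N w 1 + Min (b ` {..<d})"
    and "TD N d (job_update d srv b w)"
proof -
  define w' where "w' = job_update d srv b w"
  define M where "M = Min ((\<lambda>j. w (srv j) + b j) ` {..<d})"
  define mb where "mb = Min (b ` {..<d})"
  define a where "a = ord_wl N w 1"
  obtain js where js: "js < d" "b js = mb" "\<forall>j<d. mb \<le> b j" using Min_b[OF d(1), of b] unfolding mb_def by blast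
  have mb0: "0 \<le> mb" using js b by auto
  have wa: "\<forall>k<N. w k \<le> a" unfolding a_def using O_top by blast
  have Ml: "M \<le> a + mb"
  proof -
    have "w (srv js) \<le> a" using wa srv js(1) by blast
    thus ?thesis using JU_Mle[OF js(1), of w srv b] js(2) unfolding M_def by linarith
  qed
  have w'le: "w' k \<le> max M (w k)" for k unfolding w'_def M_def by (rule JU_le_max)
  have N1: "1 \<le> N" using d by simp
  have "\<forall>k<N. w' k \<le> a + mb" using w'le wa Ml mb0 by (smt (verit))
  thus "ord_wl N (job_update d srv b w) 1 \<le> ord_wl N w 1 + Min (b ` {..<d})"
    using O_upper[OF _ order_refl N1] unfolding w'_def a_def mb_def by blast
  have up: "\<forall>k<N. w' k \<le> max M a" using w'le wa by (smt (verit))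
  have top: "ord_wl N w' 1 \<le> max M a" using O_upper[OF up order_refl N1] .
  have low: "max M a \<le> ord_wl N w' i" if i: "1 \<le> i" "i \<le> d" for i
  proof (cases "M \<le> a")
    case True
    have "ord_wl N w i \<le> ord_wl N w' i" using O_mono[of N w w' i] JU_ge i d unfolding w'_def by force
    moreover have "ord_wl N w i = a" using td i unfolding TD_def a_def by blast
    ultimately show ?thesis using True by simp
  next
    case False
    have "srv ` {..<d} \<subseteq> {k. k < N \<and> M \<le> w' k}"
    proof
      fix k assume k: "k \<in> srv ` {..<d}"
      hence "w' k = max M (w k)" unfolding w'_def M_def by (rule JU_in)
      thus "k \<in> {k. k < N \<and> M \<le> w' k}" using k srv by auto
    qed
    from card_mono[OF _ this] have "card (srv ` {..<d}) \<le> cnt N w' M" by (simp add: cnt_def)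
    moreover have "card (srv ` {..<d}) = d" using card_image[OF inj] by simp
    ultimately have "M \<le> ord_wl N w' i" using KL[of i N M w'] i d by simp
    thus ?thesis using False by simp
  qed
  show "TD N d (job_update d srv b w)" unfolding TD_def w'_def[symmetric]
  proof (intro allI impI)
    fix i assume i: "1 \<le> i \<and> i \<le> d"
    have "ord_wl N w' i \<le> ord_wl N w' 1" using O_anti[of 1 i N w'] i d by linarith
    thus "ord_wl N w' i = ord_wl N w' 1" using low[of i] top i by linarith
  qed
qed

lemma AUX_A:
  assumes s: "sorts N w \<sigma>" and d: "1 \<le> d" "d \<le> N" and b: "\<forall>j<d. 0 \<le> b j" and td: "TD N d w"
  shows "\<forall>i. 1 \<le> i \<and> i \<le> d \<longrightarrow> ord_wl N (job_update d \<sigma> b w) i = ord_wl N w 1 + Min (b ` {..<d})"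
    and "\<forall>i. d < i \<and> i \<le> N \<longrightarrow> ord_wl N (job_update d \<sigma> b w) i = ord_wl N w i"
proof -
  define w' where "w' = job_update d \<sigma> b w"
  define M where "M = Min ((\<lambda>j. w (\<sigma> j) + b j) ` {..<d})"
  define mb where "mb = Min (b ` {..<d})"
  define a where "a = ord_wl N w 1"
  have bij: "bij_betw \<sigma> {..<N} {..<N}" and mo: "\<And>i j. i \<le> j \<Longrightarrow> j < N \<Longrightarrow> w (\<sigma> j) \<le> w (\<sigma> i)"
    using s by (auto simp: sorts_def)
  have inj: "inj_on \<sigma> {..<N}" using bij by (simp add: bij_betw_def)
  obtain js where js: "js < d" "b js = mb" "\<forall>j<d. mb \<le> b j" using Min_b[OF d(1), of b] unfolding mb_def by blast
  have mb0: "0 \<le> mb" using js b by auto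
  have wt: "w (\<sigma> j) = a" if "j < d" for j
  proof -
    have "ord_wl N w (Suc j) = w (\<sigma> j)" using O_sorts[OF s] that d by simp
    moreover have "ord_wl N w (Suc j) = a"
    proof -
      have "1 \<le> Suc j \<and> Suc j \<le> d" using that by simp
      thus ?thesis using td unfolding TD_def a_def by blast
    qed
    ultimately show ?thesis by simp
  qed
  have Ml: "M \<le> a + mb" using JU_Mle[OF js(1), of w \<sigma> b] js(2) wt[OF js(1)] unfolding M_def by simp
  have Mg: "a + mb \<le> M" unfolding M_def
    by (rule Min.boundedI) (use d wt js(3) in \<open>auto simp: lessThan_empty_iff\<close>)
  have M: "M = a + mb" using Ml Mg by simp
  have w'in: "w' (\<sigma> j) = a + mb" if "j < d" for j
    using JU_in[of "\<sigma> j" \<sigma> d b w] that M wt[OF that] mb0 unfolding w'_def M_def by auto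
  have w'out: "w' (\<sigma> j) = w (\<sigma> j)" if "d \<le> j" "j < N" for j
  proof -
    have "\<sigma> j \<notin> \<sigma> ` {..<d}"
    proof
      assume "\<sigma> j \<in> \<sigma> ` {..<d}"
      then obtain j' where "j' < d" "\<sigma> j = \<sigma> j'" by auto
      hence "j = j'" using inj that d by (auto dest: inj_onD)
      thus False using that \<open>j' < d\<close> by simp
    qed
    thus ?thesis unfolding w'_def by (rule JU_out)
  qed
  have s': "sorts N w' \<sigma>" unfolding sorts_def
  proof (intro conjI allI impI)
    show "bij_betw \<sigma> {..<N} {..<N}" by (rule bij)
    fix i j assume ij: "i \<le> j \<and> j < N"
    show "w' (\<sigma> j) \<le> w' (\<sigma> i)"
    proof (cases "j < d")
      case True thus ?thesis using w'in ij by simp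
    next
      case False
      note jo = w'out[of j] False ij
      show ?thesis
      proof (cases "i < d")
        case True
        have "w (\<sigma> j) \<le> w (\<sigma> i)" using mo ij by blast
        thus ?thesis using jo w'in[OF True] wt[OF True] mb0 False ij by simp
      next
        case False
        thus ?thesis using jo w'out[of i] mo[of i j] ij by simp
      qed
    qed
  qed
  show "\<forall>i. 1 \<le> i \<and> i \<le> d \<longrightarrow> ord_wl N (job_update d \<sigma> b w) i = ord_wl N w 1 + Min (b ` {..<d})"
  proof (intro allI impI)
    fix i assume i: "1 \<le> i \<and> i \<le> d"
    have "ord_wl N w' (Suc (i - 1)) = w' (\<sigma> (i - 1))" using O_sorts[OF s', of "i - 1"] i d by (metis Suc_le_eq Suc_pred' le_trans less_eq_Suc_le zero_less_one)
    moreover have "Suc (i - 1) = i" using i by simp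
    ultimately have "ord_wl N w' i = w' (\<sigma> (i - 1))" by simp
    thus "ord_wl N (job_update d \<sigma> b w) i = ord_wl N w 1 + Min (b ` {..<d})"
    proof -
      have "i - 1 < d" using i by linarith
      thus ?thesis using w'in[of "i - 1"] \<open>ord_wl N w' i = w' (\<sigma> (i - 1))\<close> unfolding w'_def a_def mb_def by simp
    qed
  qed
  show "\<forall>i. d < i \<and> i \<le> N \<longrightarrow> ord_wl N (job_update d \<sigma> b w) i = ord_wl N w i"
  proof (intro allI impI)
    fix i assume i: "d < i \<and> i \<le> N"
    have iN: "i - 1 < N" using i by linarith
    have c1: "ord_wl N w' (Suc (i - 1)) = w' (\<sigma> (i - 1))" using O_sorts[OF s' iN] .
    have c2: "ord_wl N w (Suc (i - 1)) = w (\<sigma> (i - 1))" using O_sorts[OF s iN] .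
    have c3: "Suc (i - 1) = i" using i by simp show "ord_wl N (job_update d \<sigma> b w) i = ord_wl N w i"
    proof -
      have "d \<le> i - 1" using i by linarith
      thus ?thesis using w'out[of "i - 1"] iN c1 c2 c3 unfolding w'_def by simp
    qed
  qed
qed

lemma B1_FORM:
  assumes s: "sorts N w \<sigma>" and td: "TD N d w" and d: "1 \<le> d" "d \<le> N"
    and b: "\<forall>j<d. 0 \<le> b j" and inj: "inj_on rr {..<d}"
    and img: "rr ` {..<d} = insert (N - 1) {..<d - 1}"
    and j0: "j0 < d" "b j0 = 0" and jb: "jb < d" "rr jb = N - 1" and ne: "j0 \<noteq> jb"
  shows "job_update d (\<lambda>j. \<sigma> (rr j)) b w
         = w(\<sigma> (N - 1) := min (ord_wl N w 1) (ord_wl N w N + b jb))"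
proof -
  define a where "a = ord_wl N w 1"
  define c where "c = ord_wl N w N"
  define M where "M = Min ((\<lambda>j. w (\<sigma> (rr j)) + b j) ` {..<d})"
  have bij: "bij_betw \<sigma> {..<N} {..<N}" using s by (simp add: sorts_def)
  have injs: "inj_on \<sigma> {..<N}" using bij by (simp add: bij_betw_def)
  have wt: "w (\<sigma> \<rho>) = a" if "\<rho> < d - 1" for \<rho>
  proof -
    have "\<rho> < N" using that d by linarith
    hence "ord_wl N w (Suc \<rho>) = w (\<sigma> \<rho>)" using O_sorts[OF s] by blast
    moreover have "1 \<le> Suc \<rho> \<and> Suc \<rho> \<le> d" using that by linarith
    hence "ord_wl N w (Suc \<rho>) = a" using td unfolding TD_def a_def by blast
    ultimately show ?thesis by simp
  qed
  have wb: "w (\<sigma> (N - 1)) = c"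
  proof -
    have "N - 1 < N" using d by linarith
    hence "ord_wl N w (Suc (N - 1)) = w (\<sigma> (N - 1))" using O_sorts[OF s] by blast
    moreover have "Suc (N - 1) = N" using d by linarith
    ultimately show ?thesis unfolding c_def by simp
  qed
  have ca: "c \<le> a" unfolding a_def c_def using O_anti[of 1 N N w] d by linarith
  have rj: "rr j = N - 1 \<and> j = jb \<or> rr j < d - 1" if "j < d" for j
  proof -
    have "rr j \<in> insert (N - 1) {..<d - 1}" using img that by blast
    moreover have "rr j = N - 1 \<Longrightarrow> j = jb" using inj that jb by (metis inj_onD lessThan_iff)
    ultimately show ?thesis by auto
  qed
  have r0: "rr j0 < d - 1" using rj[OF j0(1)] ne by blast
  have M1: "M \<le> a" using JU_Mle[OF j0(1), of w "\<lambda>j. \<sigma> (rr j)" b] j0(2) wt[OF r0] unfolding M_def by simp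
  have M2: "M \<le> c + b jb" using JU_Mle[OF jb(1), of w "\<lambda>j. \<sigma> (rr j)" b] jb(2) wb unfolding M_def by simp
  have M3: "min a (c + b jb) \<le> M" unfolding M_def
  proof (rule Min.boundedI)
    show "finite ((\<lambda>j. w (\<sigma> (rr j)) + b j) ` {..<d})" by simp
    show "(\<lambda>j. w (\<sigma> (rr j)) + b j) ` {..<d} \<noteq> {}" using d by (auto simp: lessThan_empty_iff)
    fix y assume "y \<in> (\<lambda>j. w (\<sigma> (rr j)) + b j) ` {..<d}"
    then obtain j where j: "j < d" "y = w (\<sigma> (rr j)) + b j" by auto
    show "min a (c + b jb) \<le> y"
    proof (cases "rr j = N - 1 \<and> j = jb")
      case True
      hence "y = c + b jb" using j wb jb(2) by simp
      thus ?thesis by simp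
    next
      case False
      hence "rr j < d - 1" using rj[OF j(1)] by blast
      thus ?thesis using j wt b by force
    qed
  qed
  have M: "M = min a (c + b jb)" using M1 M2 M3 by linarith
  show ?thesis
  proof (rule ext)
    fix k
    show "job_update d (\<lambda>j. \<sigma> (rr j)) b w k = (w(\<sigma> (N - 1) := min (ord_wl N w 1) (ord_wl N w N + b jb))) k"
    proof (cases "k \<in> (\<lambda>j. \<sigma> (rr j)) ` {..<d}")
      case True
      have ju: "job_update d (\<lambda>j. \<sigma> (rr j)) b w k = max M (w k)" unfolding M_def using JU_in[OF True] .
      from True obtain j where j: "j < d" "k = \<sigma> (rr j)" by auto
      show ?thesis
      proof (cases "rr j = N - 1 \<and> j = jb")
        case True
        thus ?thesis using ju j wb M ca b jb(1) unfolding a_def[symmetric] c_def[symmetric] by auto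
      next
        case False
        hence r: "rr j < d - 1" using rj[OF j(1)] by blast
        have "k \<noteq> \<sigma> (N - 1)"
        proof
          assume "k = \<sigma> (N - 1)"
          hence "rr j = N - 1" using injs j r d by (auto dest: inj_onD)
          thus False using r d by linarith
        qed
        thus ?thesis using ju j wt[OF r] M1 unfolding a_def[symmetric] by simp
      qed
    next
      case False
      have "\<sigma> (N - 1) \<in> (\<lambda>j. \<sigma> (rr j)) ` {..<d}" using jb by (metis image_eqI lessThan_iff)
      hence "k \<noteq> \<sigma> (N - 1)" using False by blast
      thus ?thesis using JU_out[OF False] by simp
    qed
  qed
qed

lemma JUMP:
  assumes d: "1 \<le> d" "d \<le> N" and K: "1 \<le> K" and x: "\<forall>j<d. 0 < x n j"
    and r: "inj_on (r n) {..<d}" "r n ` {..<d} \<subseteq> {..<N}"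
    and so: "sorts N wo \<sigma>o" and sa: "sorts N wa \<sigma>a"
    and g: "G N wo wa" and td: "TD N d wa"
  shows "G N (orig_jump d K z x r n \<sigma>o wo) (aux_jump N d K z x r n \<sigma>a wa)
         \<and> TD N d (aux_jump N d K z x r n \<sigma>a wa)"
proof -
  define b where "b = req K z x n"
  have b0: "\<forall>j<d. 0 \<le> b j" using x K unfolding b_def req_def by auto
  have tdo: "TD N d wo" using TD_orig[OF g td d(2)] .
  have N1: "1 \<le> N" using d by simp
  have bijo: "bij_betw \<sigma>o {..<N} {..<N}" using so by (simp add: sorts_def)
  have bija: "bij_betw \<sigma>a {..<N} {..<N}" using sa by (simp add: sorts_def)
  have srvo: "\<forall>j<d. \<sigma>o (r n j) < N" using r(2) bijo unfolding bij_betw_def by blast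
  have injo: "inj_on (\<lambda>j. \<sigma>o (r n j)) {..<d}"
  proof -
    have "inj_on \<sigma>o (r n ` {..<d})" using bijo r(2) unfolding bij_betw_def by (rule inj_on_subset[OF conjunct1])
    thus ?thesis using comp_inj_on[OF r(1)] by (simp add: comp_def)
  qed
  have oj: "orig_jump d K z x r n \<sigma>o wo = job_update d (\<lambda>j. \<sigma>o (r n j)) b wo"
    by (simp add: orig_jump_def b_def)
  have gi: "ord_wl N wo 1 - ord_wl N wo i \<le> ord_wl N wa 1 - ord_wl N wa i" if "1 \<le> i" "i \<le> N" for i
    using g that unfolding G_def by blast
  have j0: "\<exists>j0<d. b j0 = 0" if "\<not> typeA d z n"
    using that unfolding typeA_def b_def req_def by auto
  show ?thesis
  proof (cases "typeA d z n")
    case A: True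
    have aj: "aux_jump N d K z x r n \<sigma>a wa = job_update d \<sigma>a b wa"
      using A by (simp add: aux_jump_def b_def)
    define ow where "ow = job_update d (\<lambda>j. \<sigma>o (r n j)) b wo"
    define aw where "aw = job_update d \<sigma>a b wa"
    define mb where "mb = Min (b ` {..<d})"
    have o1: "ord_wl N ow 1 \<le> ord_wl N wo 1 + mb" using ORIG_A(1)[OF d b0 srvo injo tdo] unfolding ow_def mb_def .
    have o2: "TD N d ow" using ORIG_A(2)[OF d b0 srvo injo tdo] unfolding ow_def .
    have o3: "ord_wl N wo i \<le> ord_wl N ow i" if "1 \<le> i" "i \<le> N" for i
      using O_mono[OF _ that] JU_ge unfolding ow_def by blast
    have a1: "ord_wl N aw i = ord_wl N wa 1 + mb" if "1 \<le> i" "i \<le> d" for i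
      using AUX_A(1)[OF sa d b0 td] that unfolding aw_def mb_def by blast
    have a2: "ord_wl N aw i = ord_wl N wa i" if "d < i" "i \<le> N" for i
      using AUX_A(2)[OF sa d b0 td] that unfolding aw_def by blast
    have "G N ow aw" unfolding G_def
    proof (intro allI impI)
      fix i assume i: "1 \<le> i \<and> i \<le> N"
      show "ord_wl N ow 1 - ord_wl N ow i \<le> ord_wl N aw 1 - ord_wl N aw i"
      proof (cases "i \<le> d")
        case True
        have "ord_wl N ow i = ord_wl N ow 1" using o2 i True unfolding TD_def by blast
        moreover have "ord_wl N aw i = ord_wl N aw 1" using a1[of i] a1[of 1] i True d by simp
        ultimately show ?thesis by simp
      next
        case False
        have "ord_wl N aw 1 = ord_wl N wa 1 + mb" using a1[of 1] d by simp
        moreover have "ord_wl N aw i = ord_wl N wa i" using a2[of i] i False by simp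
        ultimately show ?thesis using o1 o3[of i] gi[of i] i by linarith
      qed
    qed
    moreover have "TD N d aw" unfolding TD_def using a1 d by simp
    ultimately show ?thesis using oj aj unfolding ow_def aw_def by simp
  next
    case nA: False
    obtain j0 where j0: "j0 < d" "b j0 = 0" using j0[OF nA] by blast
    show ?thesis
    proof (cases "typeB1 N d z r n")
      case B1: True
      have aj: "aux_jump N d K z x r n \<sigma>a wa = job_update d (\<lambda>j. \<sigma>a (r n j)) b wa"
        using nA B1 by (simp add: aux_jump_def b_def)
      have img: "r n ` {..<d} = insert (N - 1) {..<d - 1}" using B1 unfolding typeB1_def by blast
      then obtain jb where jb: "jb < d" "r n jb = N - 1" by (metis imageE insertI1 lessThan_iff)
      have nz: "\<not> z n jb" using B1 jb unfolding typeB1_def by blast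
      obtain j1 where j1: "j1 < d" "z n j1" using nA unfolding typeA_def by blast
      have j1b: "b j1 = 0" using j1 unfolding b_def req_def by simp
      have ne: "j1 \<noteq> jb" using nz j1 by blast
      have fo: "job_update d (\<lambda>j. \<sigma>o (r n j)) b wo
         = wo(\<sigma>o (N - 1) := min (ord_wl N wo 1) (ord_wl N wo N + b jb))"
        using B1_FORM[OF so tdo d b0 r(1) img j1(1) j1b jb ne] .
      have fa: "job_update d (\<lambda>j. \<sigma>a (r n j)) b wa
         = wa(\<sigma>a (N - 1) := min (ord_wl N wa 1) (ord_wl N wa N + b jb))"
        using B1_FORM[OF sa td d b0 r(1) img j1(1) j1b jb ne] .
      have NN: "N - 1 < N" "Suc (N - 1) = N" using d by auto
      have po: "\<sigma>o (N - 1) < N" using bijo NN unfolding bij_betw_def by blast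
      have pa: "\<sigma>a (N - 1) < N" using bija NN unfolding bij_betw_def by blast
      have wpo: "wo (\<sigma>o (N - 1)) = ord_wl N wo N" using O_sorts[OF so NN(1)] NN(2) by simp
      have wpa: "wa (\<sigma>a (N - 1)) = ord_wl N wa N" using O_sorts[OF sa NN(1)] NN(2) by simp
      have bb: "0 \<le> b jb" using b0 jb by blast
      show ?thesis using B1_CMP[OF g po wpo pa wpa bb] TD_upd[OF td d(2) pa wpa bb] oj aj fo fa by simp
    next
      case nB1: False
      show ?thesis
      proof (cases "typeC d z n")
        case C: True
        have bz: "\<forall>j<d. b j = 0" using C unfolding typeC_def b_def req_def by simp
        have aj: "aux_jump N d K z x r n \<sigma>a wa = wa"
          using nA C JU_zero[OF bz] by (simp add: aux_jump_def b_def)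
        have "orig_jump d K z x r n \<sigma>o wo = wo" using oj JU_zero[OF bz] by simp
        thus ?thesis using aj g td by simp
      next
        case nC: False
        have aj: "aux_jump N d K z x r n \<sigma>a wa = wa"
          using nA nB1 nC by (simp add: aux_jump_def)
        have "G N (job_update d (\<lambda>j. \<sigma>o (r n j)) b wo) wa" unfolding G_def
        proof (intro allI impI)
          fix i assume i: "1 \<le> i \<and> i \<le> N"
          show "ord_wl N (job_update d (\<lambda>j. \<sigma>o (r n j)) b wo) 1 - ord_wl N (job_update d (\<lambda>j. \<sigma>o (r n j)) b wo) i
                \<le> ord_wl N wa 1 - ord_wl N wa i"
          proof -
            have i1: "1 \<le> i" "i \<le> N" using i by auto
            show ?thesis using ORIG_B[where srv="\<lambda>j. \<sigma>o (r n j)" and b=b and w=wo, OF j0(1,2) srvo i1] gi[OF i1] by linarith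
          qed
        qed
        thus ?thesis using aj oj td by simp
      qed
    qed
  qed
qed

lemma post_eq: "post fl jp T \<sigma> w0 n = jp n (\<sigma> n) (pre fl jp T \<sigma> w0 n)"
  by (cases n) (simp_all add: pre_def)

theorem lemma2:
  fixes N d :: nat and K :: real and T :: "nat \<Rightarrow> real"
    and z :: "nat \<Rightarrow> nat \<Rightarrow> bool" and x :: "nat \<Rightarrow> nat \<Rightarrow> real"
    and r :: "nat \<Rightarrow> nat \<Rightarrow> nat" and \<sigma> \<sigma>a :: "nat \<Rightarrow> nat \<Rightarrow> nat"
    and w0 :: state and t :: real and i :: nat
  assumes "1 \<le> d" and "d \<le> N" and "1 \<le> K"
    and "strict_mono T" and "0 < T 0" and "filterlim T at_top sequentially"
    and "\<forall>n j. j < d \<longrightarrow> 0 < x n j"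
    and "\<forall>n. inj_on (r n) {..<d} \<and> r n ` {..<d} \<subseteq> {..<N}"
    and "\<forall>k<N. 0 \<le> w0 k"
    and "\<forall>j\<in>{1..d}. ord_wl N w0 j = ord_wl N w0 1"
    and "\<forall>n. sorts N (pre drain (orig_jump d K z x r) T \<sigma> w0 n) (\<sigma> n)"
    and "\<forall>n. sorts N (pre (aux_drain N) (aux_jump N d K z x r) T \<sigma>a w0 n) (\<sigma>a n)"
    and "0 \<le> t" and "1 \<le> i" and "i \<le> N"
  shows "ord_wl N (traj (aux_drain N) (aux_jump N d K z x r) T \<sigma>a w0 t) 1
           - ord_wl N (traj (aux_drain N) (aux_jump N d K z x r) T \<sigma>a w0 t) i
         \<ge> ord_wl N (traj drain (orig_jump d K z x r) T \<sigma> w0 t) 1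
           - ord_wl N (traj drain (orig_jump d K z x r) T \<sigma> w0 t) i"
proof -
  let ?jo = "orig_jump d K z x r"
  let ?fa = "aux_drain N"
  let ?ja = "aux_jump N d K z x r"
  have N1: "1 \<le> N" using assms(1,2) by simp
  have inv0: "G N w0 w0 \<and> TD N d w0"
  proof -
    have "\<forall>i. 1 \<le> i \<and> i \<le> d \<longrightarrow> ord_wl N w0 i = ord_wl N w0 1" using assms(10) by (meson atLeastAtMost_iff)
    thus ?thesis unfolding G_def TD_def using order_refl by blast
  qed
  have step: "G N (post drain ?jo T \<sigma> w0 n) (post ?fa ?ja T \<sigma>a w0 n) \<and> TD N d (post ?fa ?ja T \<sigma>a w0 n)"
    if "G N (pre drain ?jo T \<sigma> w0 n) (pre ?fa ?ja T \<sigma>a w0 n) \<and> TD N d (pre ?fa ?ja T \<sigma>a w0 n)" for n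
  proof -
    have x': "\<forall>j<d. 0 < x n j" using assms(7) by blast
    have r': "inj_on (r n) {..<d}" "r n ` {..<d} \<subseteq> {..<N}" using assms(8) by auto
    show ?thesis unfolding post_eq[of drain] post_eq[of ?fa]
      using JUMP[where x=x and n=n and r=r and z=z, OF assms(1,2,3) x' r' assms(11)[rule_format, of n] assms(12)[rule_format, of n]] that by blast
  qed
  have inv_post: "G N (post drain ?jo T \<sigma> w0 n) (post ?fa ?ja T \<sigma>a w0 n) \<and> TD N d (post ?fa ?ja T \<sigma>a w0 n)" for n
  proof (induction n)
    case 0
    have "G N (pre drain ?jo T \<sigma> w0 0) (pre ?fa ?ja T \<sigma>a w0 0) \<and> TD N d (pre ?fa ?ja T \<sigma>a w0 0)"
      unfolding pre_def using FLOW[of N w0 w0 d "T 0"] inv0 N1 assms(2) by (simp only: nat.case)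
    thus ?case by (rule step)
  next
    case (Suc m)
    have "G N (pre drain ?jo T \<sigma> w0 (Suc m)) (pre ?fa ?ja T \<sigma>a w0 (Suc m)) \<and> TD N d (pre ?fa ?ja T \<sigma>a w0 (Suc m))"
      unfolding pre_def nat.case using FLOW[of N _ _ d, OF _ _ N1 assms(2)] Suc by blast
    thus ?case by (rule step)
  qed
  have fin: "G N (traj drain ?jo T \<sigma> w0 t) (traj ?fa ?ja T \<sigma>a w0 t)"
  proof (cases "t < T 0")
    case True
    thus ?thesis unfolding traj_def using FLOW[of N w0 w0 d t] inv0 N1 assms(2) by (simp only: if_True)
  next
    case False
    thus ?thesis unfolding traj_def Let_def using FLOW[of N _ _ d, OF _ _ N1 assms(2)] inv_post by (simp only: if_False)
  qed
  show ?thesis using fin assms(14,15) unfolding G_def by blast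
qed

end
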